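(* Under the standing assumptions in the context, the coefficients $a_g$ satisfy $a_2=\tfrac{5}{24}$ and, for every $g\ge 3$, $$(3g-3)\,a_g=\frac12\left(\sum_{h=2}^{g-2}(3h-3)(3g-3h-3)\,a_h\,a_{g-h}+(3g-6)(3g-3)\,a_{g-1}\right).$$
   Context: Setting: the polynomial formulation of the BCOV holomorphic anomaly equations on a one-dimensional slice (local coordinate $z$) of the moduli space of a Calabi–Yau threefold. $C_{zzz}$ is the holomorphic Yukawa coupling, assumed nonzero. The genus-$g$ free energies $\mathcal F^{(g)}$ ($g\ge 1$) are polynomials in the generators $S^{zz},S^z,S,K_z$ with coefficients holomorphic (rational) in $z$. For $g\ge2$, $\mathcal F^{(g)}$ has degree $3g-3$ when $S^{zz},S^z,S,K_z$ are given weights $1,2,3,1$, and its term of highest degree in $S^{zz}$ is $a_g\,C_{zzz}^{2g-2}(S^{zz})^{3g-3}$ with $a_g\in\mathbb Q$. "Lower order terms" (l.o.t.) below means terms of lower degree in $S^{zz}$ relative to the displayed top term of the same weight. The covariant derivative $D_z$ acts as a derivation (Leibniz rule) and satisfies, at top order, $D_zS^{zz}=2S^z-C_{zzz}(S^{zz})^2+h^{zz}_z$ (with $h^{zz}_z$ holomorphic), so $D_zS^{zz}=-C_{zzz}(S^{zz})^2+\text{l.o.t.}$, and $D_zC_{zzz}=\partial_zC_{zzz}-3s^z_{zz}C_{zzz}-4K_zC_{zzz}+3C_{zzz}^2S^{zz}$ (with $s^z_{zz}$ holomorphic), so $D_zC_{zzz}=3C_{zzz}^2S^{zz}+\text{l.o.t.}$.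 The genus-one free energy satisfies $D_z\mathcal F^{(1)}=\tfrac12C_{zzz}S^{zz}+\text{l.o.t.}$. For $g\ge2$ the holomorphic anomaly equation in polynomial form reads $$\frac{\partial\mathcal F^{(g)}}{\partial S^{zz}}=\frac12\sum_{h=1}^{g-1}D_z\mathcal F^{(h)}\,D_z\mathcal F^{(g-h)}+\frac12 D_zD_z\mathcal F^{(g-1)},$$ together with $0=\partial_{K_z}\mathcal F^{(g)}+S^z\partial_S\mathcal F^{(g)}+S^{zz}\partial_{S^z}\mathcal F^{(g)}$. *)

theory Defs
  imports "HOL-Computational_Algebra.Polynomial"
begin

end

theory Submission imports Defs begin

lemma coeff_mult_bound:
  fixes p q :: "'a::comm_semiring_0 poly"
  assumes "degree p \<le> m" "degree q \<le> n"
  shows "coeff (p*q) (m+n) = coeff p m * coeff q n"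
proof (cases "degree p = m \<and> degree q = n")
  case True then show ?thesis using coeff_mult_degree_sum[of p q] by simp
next
  case False
  then have "degree p < m \<or> degree q < n" using assms by auto
  then have "degree (p*q) < m+n" using degree_mult_le[of p q] assms by linarith
  moreover have "coeff p m * coeff q n = 0" using \<open>degree p < m \<or> degree q < n\<close> by (auto simp: coeff_eq_0)
  ultimately show ?thesis by (simp add: coeff_eq_0)
qed

lemma aux_alg: "(3::'a::field_char_0)*C^2 * C^k + C * (of_nat (3*k) * C^(k+1)) = of_nat (3 * Suc k) * C^(Suc k + 1)"
  by (simp add: power2_eq_square algebra_simps)

locale der =
  fixes D :: "'a::field_char_0 poly \<Rightarrow> 'a poly"
  assumes D_add: "\<And>p q. D (p + q) = D p + D q"
    and D_leibniz: "\<And>p q. D (p * q) = D p * q + p * D q"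
begin

lemma D0[simp]: "D 0 = 0" using D_add[of 0 0] by simp
lemma D1[simp]: "D 1 = 0" using D_leibniz[of 1 1] by simp
lemma Dminus: "D (-p) = - D p" using D_add[of p "-p"] by (simp add: add_eq_0_iff2)
lemma Ddiff: "D (p - q) = D p - D q" using D_add[of p "-q"] Dminus[of q] by simp
lemma Dsum: "D (sum f A) = sum (\<lambda>x. D (f x)) A"
  by (induction A rule: infinite_finite_induct) (auto simp: D_add)

lemma D_of_nat: "D [:of_nat n:] = 0"
proof (induction n)
  case (Suc n)
  have "[:of_nat (Suc n):] = 1 + [:of_nat n:]" by (simp add: one_pCons)
  then have "D [:of_nat (Suc n):] = D 1 + D [:of_nat n:]" using D_add by metis
  then show ?case using Suc by simp
qed simp

lemma D_of_int: "D [:of_int n:] = 0"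
proof (cases "n \<ge> 0")
  case True then obtain m where "n = int m" by (metis nonneg_eq_int)
  then show ?thesis using D_of_nat[of m] by simp
next
  case False then obtain m where "n = - int m" by (metis nonpos_int_cases linear)
  then have "[:of_int n:] = - [:of_nat m:]" by simp
  then have "D [:of_int n:] = - D [:of_nat m:]" using Dminus by metis
  then show ?thesis using D_of_nat[of m] by simp
qed

lemma D_of_rat: "D [:of_rat r:] = 0"
proof -
  obtain n m where r: "r = Fract n m" "m \<noteq> 0" by (cases r) auto
  have e: "[:of_int m:] * [:of_rat r:] = [:(of_int n :: 'a):]"
    using r by (simp add: of_rat_rat)
  have "D ([:of_int m:] * [:of_rat r:]) = [:of_int m:] * D [:of_rat r:]"
    using D_leibniz[of "[:of_int m:]" "[:of_rat r:]"] D_of_int[of m] by simp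
  then have "[:(of_int m::'a):] * D [:of_rat r:] = 0" using e D_of_int by simp
  moreover have "[:(of_int m::'a):] \<noteq> 0" using r by simp
  ultimately show ?thesis by simp
qed

lemma deg_D:
  assumes dc: "\<And>c. degree (D [:c:]) \<le> 1" and dx: "degree (D [:0,1:]) \<le> 2"
  shows "degree p \<le> k \<Longrightarrow> degree (D p) \<le> k + 1"
proof (induction p arbitrary: k rule: pCons_induct)
  case 0 then show ?case by simp
next
  case (pCons c q)
  have e: "pCons c q = [:c:] + [:0,1:] * q" by simp
  have dq: "degree q \<le> k - 1" using pCons.prems pCons.hyps by (cases "q = 0") auto
  have "degree (D [:c:]) \<le> k + 1" using dc[of c] by simp
  moreover have "degree (D [:0,1:] * q) \<le> k + 1"
  proof (cases "q = 0")
    case False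
    then have "k \<ge> 1" using pCons.prems by simp
    then show ?thesis using degree_mult_le[of "D [:0,1:]" q] dx dq by linarith
  qed simp
  moreover have "degree ([:0,1:] * D q) \<le> k + 1"
  proof (cases "q = 0")
    case False
    then have "k \<ge> 1" using pCons.prems by simp
    then show ?thesis using degree_mult_le[of "[:0,1:]" "D q"] pCons.IH[OF dq] by simp
  qed simp
  ultimately show ?case unfolding e D_add D_leibniz
    by (simp add: degree_add_le)
qed

lemma coeff_D_zero:
  assumes dc: "\<And>c. degree (D [:c:]) \<le> 1" and dx: "degree (D [:0,1:]) \<le> 2"
    and "degree p \<le> N" "coeff p N = 0"
  shows "coeff (D p) (N+1) = 0"
proof (cases "N = 0")
  case True
  then have "degree p = 0" using assms(3) by simp
  then have "p = [:coeff p 0:]" by (rule degree_0_id[symmetric])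
  then have "p = 0" using assms(4) True by simp
  then show ?thesis by simp
next
  case False
  have "degree p \<le> N - 1"
  proof (rule ccontr)
    assume "\<not> degree p \<le> N - 1"
    then have dN: "degree p = N" using assms(3) by simp
    then have "p \<noteq> 0" using False by auto
    then have "coeff p (degree p) \<noteq> 0" by simp
    then show False using dN assms(4) by simp
  qed
  then have "degree (D p) \<le> N - 1 + 1" by (rule deg_D[OF dc dx])
  then have "degree (D p) \<le> N" using False by simp
  then show ?thesis by (simp add: coeff_eq_0)
qed

lemma D_Ck:
  assumes dC: "degree (D [:C:] - [:0, 3*C^2:]) < 1"
  shows "coeff (D [:C^k:]) 1 = of_nat (3*k) * C^(k+1)"
proof (induction k)
  case 0 then show ?case by (simp add: one_pCons[symmetric])
next
  case (Suc k)
  have c1: "coeff (D [:C:]) 1 = 3*C^2"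
  proof -
    have "coeff (D [:C:] - [:0, 3*C^2:]) 1 = 0" using dC by (intro coeff_eq_0) simp
    then show ?thesis by (simp only: coeff_diff) simp
  qed
  have "[:C^Suc k:] = [:C:] * [:C^k:]" by simp
  then have "D [:C^Suc k:] = D [:C:] * [:C^k:] + [:C:] * D [:C^k:]" by (simp only: D_leibniz)
  then have "coeff (D [:C^Suc k:]) 1 = coeff (D [:C:]) 1 * C^k + C * coeff (D [:C^k:]) 1"
    by simp
  also have "\<dots> = 3*C^2 * C^k + C * (of_nat (3*k) * C^(k+1))" by (simp only: c1 Suc.IH)
  also have "\<dots> = of_nat (3 * Suc k) * C^(Suc k + 1)" by (rule aux_alg)
  finally show ?case .
qed

lemma D_Xn:
  assumes dx: "degree (D [:0,1:]) \<le> 2" and cx: "coeff (D [:0,1:]) 2 = - C"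
  shows "degree (D ([:0,1:]^n)) \<le> n+1 \<and> coeff (D ([:0,1:]^n)) (n+1) = - of_nat n * C"
proof (induction n)
  case 0 then show ?case by simp
next
  case (Suc n)
  have e: "D ([:0,1:]^Suc n) = D [:0,1:] * [:0,1:]^n + [:0,1:] * D ([:0,1:]^n)"
    unfolding power_Suc by (rule D_leibniz)
  have dXn: "degree ([:0,1:]^n :: 'a poly) \<le> n" using degree_power_le[of "[:0,1::'a:]" n] by simp
  have d1: "degree (D [:0,1:] * [:0,1:]^n) \<le> 2 + n"
    using degree_mult_le[of "D [:0,1:]" "[:0,1:]^n"] dx dXn by linarith
  have d2: "degree ([:0,1:] * D ([:0,1:]^n)) \<le> n + 2"
    using degree_mult_le[of "[:0,1:]" "D ([:0,1:]^n)"] Suc by simp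
  have c1: "coeff (D [:0,1:] * [:0,1:]^n) (2 + n) = - C"
  proof -
    have "coeff ([:0,1:]^n :: 'a poly) n = 1" by (rule coeff_linear_power)
    then show ?thesis using coeff_mult_bound[OF dx dXn] cx by simp
  qed
  have c2: "coeff ([:0,1:] * D ([:0,1:]^n)) (Suc (n+1)) = - of_nat n * C"
    using Suc by simp
  have "degree (D ([:0,1:]^Suc n)) \<le> Suc n + 1"
    unfolding e by (intro degree_add_le) (use d1 d2 in simp_all)
  moreover have "coeff (D ([:0,1:]^Suc n)) (Suc n + 1) = - of_nat (Suc n) * C"
    unfolding e coeff_add using c1 c2 by (simp add: algebra_simps)
  ultimately show ?case by blast
qed

lemma top_D:
  assumes dc: "\<And>c. degree (D [:c:]) \<le> 1"
    and dS: "degree (D [:0,1:] - [:0,0,-C:]) < 2"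
    and dC: "degree (D [:C:] - [:0, 3*C^2:]) < 1"
    and dp: "degree p \<le> N" and cp: "coeff p N = of_rat r * C^k" and Nk: "N \<le> 3*k"
  shows "degree (D p) \<le> N+1 \<and> coeff (D p) (N+1) = of_rat r * of_nat (3*k - N) * C^(k+1)"
proof -
  have eX: "D [:0,1:] = (D [:0,1:] - [:0,0,-C:]) + [:0,0,-C:]" by simp
  have dx: "degree (D [:0,1:]) \<le> 2"
    by (subst eX, intro degree_add_le) (use dS in simp_all)
  have "coeff (D [:0,1:] - [:0,0,-C:]) 2 = 0" using dS by (intro coeff_eq_0) simp
  then have cx: "coeff (D [:0,1:]) 2 = - C" by (simp only: coeff_diff) (simp add: numeral_2_eq_2 add_eq_0_iff2)
  have dDp: "degree (D p) \<le> N+1" by (rule deg_D[OF dc dx dp])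
  define c where "c = coeff p N"
  define L where "L = p - monom c N"
  have pL: "p = [:c:] * [:0,1:]^N + L" unfolding L_def by (simp add: monom_altdef)
  have dL: "degree L \<le> N" unfolding L_def
    by (intro degree_diff_le dp) (simp add: degree_monom_le)
  have cL: "coeff L N = 0" unfolding L_def c_def by (simp add: coeff_monom)
  have DL: "coeff (D L) (N+1) = 0" by (rule coeff_D_zero[OF dc dx dL cL])
  have ec: "[:c:] = [:of_rat r:] * [:C^k:]" using cp c_def by simp
  have Dc: "D [:c:] = [:of_rat r:] * D [:C^k:]"
    unfolding ec D_leibniz D_of_rat by simp
  have dDc: "degree (D [:c:]) \<le> 1" by (rule dc)
  have dXn: "degree ([:0,1:]^N :: 'a poly) \<le> N" using degree_power_le[of "[:0,1::'a:]" N] by simp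
  have cXn: "coeff ([:0,1:]^N :: 'a poly) N = 1" by (rule coeff_linear_power)
  have c1: "coeff (D [:c:] * [:0,1:]^N) (1+N) = of_rat r * (of_nat (3*k) * C^(k+1))"
  proof -
    have "coeff (D [:c:] * [:0,1:]^N) (1+N) = coeff (D [:c:]) 1 * coeff ([:0,1:]^N) N"
      by (rule coeff_mult_bound[OF dDc dXn])
    also have "\<dots> = coeff (D [:c:]) 1" using cXn by simp
    also have "\<dots> = of_rat r * coeff (D [:C^k:]) 1" unfolding Dc by simp
    also have "\<dots> = of_rat r * (of_nat (3*k) * C^(k+1))" by (simp only: D_Ck[OF dC])
    finally show ?thesis .
  qed
  have c2: "coeff ([:c:] * D ([:0,1:]^N)) (N+1) = c * (- of_nat N * C)"
    using D_Xn[OF dx cx, of N] by simp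
  have "D p = D [:c:] * [:0,1:]^N + [:c:] * D ([:0,1:]^N) + D L"
    by (subst pL) (simp only: D_add D_leibniz)
  then have "coeff (D p) (N+1) = of_rat r * (of_nat (3*k) * C^(k+1)) + c * (- of_nat N * C)"
    using c1 c2 DL by (simp add: add.commute)
  also have "\<dots> = of_rat r * of_nat (3*k - N) * C^(k+1)"
    using Nk unfolding c_def cp by (simp add: of_nat_diff algebra_simps)
  finally show ?thesis using dDp by blast
qed

end

theorem mainTheorem1:
  fixes D :: "'a::field_char_0 poly \<Rightarrow> 'a poly"
    and C :: 'a
    and F :: "nat \<Rightarrow> 'a poly"
    and a :: "nat \<Rightarrow> rat"
  assumes D_add: "\<And>p q. D (p + q) = D p + D q"
    and D_leibniz: "\<And>p q. D (p * q) = D p * q + p * D q"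
    and D_coeff: "\<And>c. degree (D [:c:]) \<le> 1"
    and C_nz: "C \<noteq> 0"
    and D_S: "degree (D [:0, 1:] - [:0, 0, - C:]) < 2"
    and D_C: "degree (D [:C:] - [:0, 3 * C ^ 2:]) < 1"
    and D_F1: "degree (D (F 1) - [:0, C / 2:]) < 1"
    and F_top: "\<And>g. g \<ge> 2 \<Longrightarrow>
        degree (F g - monom (of_rat (a g) * C ^ (2 * g - 2)) (3 * g - 3)) < 3 * g - 3"
    and HAE: "\<And>g. g \<ge> 2 \<Longrightarrow>
        pderiv (F g) = smult (1 / 2) (\<Sum>h = 1..g - 1. D (F h) * D (F (g - h)))
                       + smult (1 / 2) (D (D (F (g - 1))))"
  shows "a 2 = 5 / 24 \<and>
    (\<forall>g\<ge>3. of_nat (3 * g - 3) * a g =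
       1 / 2 * ((\<Sum>h = 2..g - 2. of_nat (3 * h - 3) * of_nat (3 * g - 3 * h - 3) * a h * a (g - h))
                + of_nat (3 * g - 6) * of_nat (3 * g - 3) * a (g - 1)))"
proof -
  interpret der D using D_add D_leibniz by unfold_locales
  define E where "E h = (if h = 1 then 1/2 else of_nat (3*h-3) * a h)" for h
  have Ftop: "degree (F g) \<le> 3*g-3 \<and> coeff (F g) (3*g-3) = of_rat (a g) * C^(2*g-2)"
    if "g \<ge> 2" for g
  proof -
    let ?M = "monom (of_rat (a g) * C ^ (2 * g - 2)) (3 * g - 3)"
    have d: "degree (F g - ?M) < 3*g-3" by (rule F_top[OF that])
    have "degree ((F g - ?M) + ?M) \<le> 3*g-3"
      by (intro degree_add_le) (use d in \<open>simp_all add: degree_monom_le\<close>)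
    then have "degree (F g) \<le> 3*g-3" by simp
    moreover have "coeff (F g - ?M) (3*g-3) = 0" using d by (intro coeff_eq_0) simp
    then have "coeff (F g) (3*g-3) = of_rat (a g) * C^(2*g-2)" by (simp add: coeff_monom)
    ultimately show ?thesis by blast
  qed
  have DF: "degree (D (F h)) \<le> 3*h-2 \<and> coeff (D (F h)) (3*h-2) = of_rat (E h) * C^(2*h-1)"
    if "h \<ge> 1" for h
  proof (cases "h = 1")
    case True
    have d: "degree (D (F 1) - [:0, C / 2:]) = 0" using D_F1 by simp
    have "degree ((D (F 1) - [:0, C / 2:]) + [:0, C / 2:]) \<le> 1"
      by (intro degree_add_le) (use d in simp_all)
    then have "degree (D (F 1)) \<le> 1" by simp
    moreover have "coeff (D (F 1) - [:0, C / 2:]) 1 = 0" using d by (intro coeff_eq_0) simp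
    then have "coeff (D (F 1)) 1 = C / 2" by (simp only: coeff_diff) simp
    ultimately show ?thesis using True by (simp add: E_def of_rat_divide)
  next
    case False
    then have h2: "h \<ge> 2" using that by simp
    have "degree (D (F h)) \<le> 3*h-3+1 \<and> coeff (D (F h)) (3*h-3+1)
        = of_rat (a h) * of_nat (3*(2*h-2) - (3*h-3)) * C^(2*h-2+1)"
      using Ftop[OF h2] h2 by (intro top_D[OF D_coeff D_S D_C]) auto
    moreover have "3*h-3+1 = 3*h-2" "3*(2*h-2) - (3*h-3) = 3*h-3" "2*h-2+1 = 2*h-1" using h2 by auto
    ultimately have X: "degree (D (F h)) \<le> 3*h-2 \<and> coeff (D (F h)) (3*h-2)
        = of_rat (a h) * of_nat (3*h-3) * C^(2*h-1)" by (simp only:)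
    have "of_rat (E h) = of_nat (3*h-3) * (of_rat (a h) :: 'a)"
      using False by (simp only: E_def if_False of_rat_mult of_rat_of_nat_eq)
    then show ?thesis using X by (simp only: mult.commute)
  qed
  have R: "of_nat (3*g-3) * a g = 1/2 * ((\<Sum>h=1..g-1. E h * E (g-h)) + E (g-1) * of_nat (3*g-4))"
    if g2: "g \<ge> 2" for g
  proof -
    have L: "coeff (pderiv (F g)) (3*g-4) = of_rat (of_nat (3*g-3) * a g) * C^(2*g-2)"
    proof -
      have e: "Suc (3*g-4) = 3*g-3" using g2 by simp
      have "coeff (pderiv (F g)) (3*g-4) = of_nat (Suc (3*g-4)) * coeff (F g) (Suc (3*g-4))"
        by (rule coeff_pderiv)
      also have "\<dots> = of_nat (3*g-3) * (of_rat (a g) * C^(2*g-2))"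
        using Ftop[OF g2] by (simp only: e)
      also have "\<dots> = of_rat (of_nat (3*g-3) * a g) * C^(2*g-2)"
        by (simp only: of_rat_mult of_rat_of_nat_eq mult.assoc)
      finally show ?thesis .
    qed
    have S: "coeff (\<Sum>h = 1..g - 1. D (F h) * D (F (g - h))) (3*g-4)
       = of_rat (\<Sum>h=1..g-1. E h * E (g-h)) * C^(2*g-2)"
    proof -
      have "coeff (D (F h) * D (F (g - h))) (3*g-4) = of_rat (E h * E (g-h)) * C^(2*g-2)"
        if "h \<in> {1..g-1}" for h
      proof -
        have h: "h \<ge> 1" "g - h \<ge> 1" using that by auto
        have "coeff (D (F h) * D (F (g - h))) ((3*h-2) + (3*(g-h)-2))
          = coeff (D (F h)) (3*h-2) * coeff (D (F (g-h))) (3*(g-h)-2)"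
          using DF[OF h(1)] DF[OF h(2)] by (intro coeff_mult_bound) auto
        moreover have "(3*h-2) + (3*(g-h)-2) = 3*g-4" using h by auto
        moreover have "C^(2*h-1) * C^(2*(g-h)-1) = C^(2*g-2)"
        proof -
          have "2*h-1 + (2*(g-h)-1) = 2*g-2" using h by auto
          then show ?thesis by (metis power_add)
        qed
        ultimately show ?thesis using DF[OF h(1)] DF[OF h(2)]
          by (simp add: of_rat_mult algebra_simps)
      qed
      then show ?thesis by (simp add: coeff_sum sum_distrib_right of_rat_sum)
    qed
    have DD: "coeff (D (D (F (g-1)))) (3*g-4) = of_rat (E (g-1) * of_nat (3*g-4)) * C^(2*g-2)"
    proof -
      have "degree (D (D (F (g-1)))) \<le> 3*(g-1)-2+1 \<and> coeff (D (D (F (g-1)))) (3*(g-1)-2+1)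
          = of_rat (E (g-1)) * of_nat (3*(2*(g-1)-1) - (3*(g-1)-2)) * C^(2*(g-1)-1+1)"
        using DF[of "g-1"] g2 by (intro top_D[OF D_coeff D_S D_C]) auto
      moreover have "3*(g-1)-2+1 = 3*g-4" "3*(2*(g-1)-1) - (3*(g-1)-2) = 3*g-4"
        "2*(g-1)-1+1 = 2*g-2" using g2 by auto
      ultimately have "coeff (D (D (F (g-1)))) (3*g-4) = of_rat (E (g-1)) * of_nat (3*g-4) * C^(2*g-2)"
        by (simp only:)
      then show ?thesis by (simp only: of_rat_mult of_rat_of_nat_eq)
    qed
    have "of_rat (of_nat (3*g-3) * a g) * C^(2*g-2)
        = of_rat (1/2 * ((\<Sum>h=1..g-1. E h * E (g-h)) + E (g-1) * of_nat (3*g-4))) * C^(2*g-2)"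
      using arg_cong[OF HAE[OF g2], of "\<lambda>p. coeff p (3*g-4)"] L S DD
      by (simp add: of_rat_mult of_rat_add of_rat_divide of_rat_of_nat_eq algebra_simps)
    then show ?thesis using C_nz by simp
  qed
  have E1: "E 1 = 1/2" by (simp add: E_def)
  have a2: "a 2 = 5/24"
  proof -
    have "of_nat (3*2-3) * a 2 = 1/2 * ((\<Sum>h=1..2-1. E h * E (2-h)) + E (2-1) * of_nat (3*2-4))"
      by (rule R) simp
    then show ?thesis by (simp add: E_def)
  qed
  have "of_nat (3 * g - 3) * a g =
       1 / 2 * ((\<Sum>h = 2..g - 2. of_nat (3 * h - 3) * of_nat (3 * g - 3 * h - 3) * a h * a (g - h))
                + of_nat (3 * g - 6) * of_nat (3 * g - 3) * a (g - 1))" if g3: "g \<ge> 3" for g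
  proof -
    obtain m where g: "g = m + 3" using g3 by (metis add.commute le_iff_add)
    have split: "(\<Sum>h=1..g-1. E h * E (g-h)) = E 1 * E (g-1) + (\<Sum>h=2..g-2. E h * E (g-h)) + E (g-1) * E 1"
    proof -
      have "(\<Sum>h=1..g-1. E h * E (g-h)) = E 1 * E (g-1) + (\<Sum>h=2..g-1. E h * E (g-h))"
        using g by (simp add: sum.atLeast_Suc_atMost numeral_2_eq_2)
      also have "(\<Sum>h=2..g-1. E h * E (g-h)) = (\<Sum>h=2..g-2. E h * E (g-h)) + E (g-1) * E 1"
      proof -
        have "g - 1 = Suc (g-2)" "2 \<le> Suc (g-2)" "g - (g-1) = 1" using g by auto
        then show ?thesis by (simp add: sum.cl_ivl_Suc)
      qed
      finally show ?thesis by simp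
    qed
    have mid: "(\<Sum>h=2..g-2. E h * E (g-h)) =
       (\<Sum>h = 2..g - 2. of_nat (3 * h - 3) * of_nat (3 * g - 3 * h - 3) * a h * a (g - h))"
    proof (rule sum.cong)
      fix h assume "h \<in> {2..g-2}"
      then have h: "h \<ge> 2" "g - h \<ge> 2" "3*(g-h)-3 = 3*g-3*h-3" by auto
      then show "E h * E (g-h) = of_nat (3 * h - 3) * of_nat (3 * g - 3 * h - 3) * a h * a (g - h)"
        by (simp add: E_def)
    qed simp
    have Eg1: "E (g-1) = of_nat (3*g-6) * a (g-1)"
    proof -
      have "g - 1 \<noteq> 1" "3*(g-1)-3 = 3*g-6" using g by auto
      then show ?thesis by (simp add: E_def)
    qed
    have n: "(of_nat (3*g-6) :: rat) = of_nat g * 3 - 6" "(of_nat (3*g-4) :: rat) = of_nat g * 3 - 4"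
        "(of_nat (3*g-3) :: rat) = of_nat g * 3 - 3" using g by (simp_all add: of_nat_diff)
    show ?thesis using R[of g] g3 unfolding split mid Eg1 E1 n by (simp add: algebra_simps)
  qed
  then show ?thesis using a2 by blast
qed

end
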